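(* Let $S\subseteq\mathbb{R}^n\times\mathbb{R}^m$ be convex, let (MOCP) be self-bounded, fix $p\in[1,\infty]$ and $\epsilon>0$. If $\bar S\subseteq S$ is a finite $\epsilon$-solution of (MOCP) (under the $p$-norm), then $\bar S$ is a finite $(\overline{\kappa}\epsilon)$-solution of (CP) (under the $p$-norm), where $\overline{\kappa}=\overline{\kappa}(m,p)=\left(\frac{m^p+m-1}{m+1}\right)^{1/p}$ (equal to $m$ for $p=\infty$).
   Context: $\|\cdot\|_p$ is the $p$-norm and $B_\epsilon$ the closed $\epsilon$-ball around $0$. (CP): compute $Y=\{y:\exists x,(x,y)\in S\}$; recession cone $A_\infty=\{y: x+\lambda y\in A\ \forall x\in A,\lambda\ge0\}$. A nonempty finite $\bar S\subseteq S$ is a finite $\epsilon$-solution of a self-bounded (CP) if $Y\subseteq\operatorname{conv}\operatorname{proj}_y[\bar S]+(\operatorname{cl}Y)_\infty+B_\epsilon$ (where (CP) self-bounded means $Y\neq\mathbb{R}^m$ and $Y\subseteq\operatorname{conv}\{y^{(1)},\dots,y^{(k)}\}+(\operatorname{cl}Y)_\infty$ for finitely many points). (MOCP): minimize $P(x,y)=(y,-\mathbf{1}^\top y)$ ($\mathbf{1}\in\mathbb{R}^m$ all-ones) w.r.t. $\le_{\mathbb{R}^{m+1}_+}$ over $(x,y)\in S$, upper image $\mathcal{P}=\operatorname{cl}(P[S]+\mathbb{R}^{m+1}_+)$; (MOCP) is self-bounded if $\mathcal{P}\ne\mathbb{R}^{m+1}$ and $\mathcal{P}\subseteq\{q\}+\mathcal{P}_\infty$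 for some $q$. With $\mathbb{1}\in\mathbb{R}^{m+1}$ the all-ones vector, a nonempty finite $\bar S\subseteq S$ is a finite $\epsilon$-solution of (MOCP) if $\mathcal{P}\subseteq\operatorname{conv}P[\bar S]+\mathcal{P}_\infty-\epsilon\{\|\mathbb{1}\|_p^{-1}\mathbb{1}\}$. *)

theory Defs
  imports "HOL-Analysis.Analysis" "HOL-Library.Extended_Real"
begin

definition pnorm :: "ereal \<Rightarrow> real^'i::finite \<Rightarrow> real" where
  "pnorm p x = (if p = \<infinity> then Max (range (\<lambda>i. \<bar>x $ i\<bar>))
                else (\<Sum>i\<in>UNIV. \<bar>x $ i\<bar> powr real_of_ereal p) powr (1 / real_of_ereal p))"

definition pball :: "ereal \<Rightarrow> real \<Rightarrow> (real^'i::finite) set" where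
  "pball p e = {x. pnorm p x \<le> e}"

definition msum :: "'a::real_vector set \<Rightarrow> 'a set \<Rightarrow> 'a set" where
  "msum A B = {a + b | a b. a \<in> A \<and> b \<in> B}"

definition rec_cone :: "'a::real_vector set \<Rightarrow> 'a set" where
  "rec_cone A = {y. \<forall>x\<in>A. \<forall>l::real. l \<ge> 0 \<longrightarrow> x + l *\<^sub>R y \<in> A}"

definition CP_Y :: "((real^'n) \<times> (real^'m)) set \<Rightarrow> (real^'m) set" where
  "CP_Y S = snd ` S"

definition CP_finite_sol :: "ereal \<Rightarrow> ((real^'n) \<times> (real^'m::finite)) set \<Rightarrow> real
    \<Rightarrow> ((real^'n) \<times> (real^'m)) set \<Rightarrow> bool" where
  "CP_finite_sol p S e Sb \<longleftrightarrow> Sb \<noteq> {} \<and> finite Sb \<and> Sb \<subseteq> S \<and>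
     CP_Y S \<subseteq> msum (msum (convex hull (snd ` Sb)) (rec_cone (closure (CP_Y S)))) (pball p e)"

text \<open>(MOCP): objective P(x,y) = (y, -1^T y) in R^(m+1), modelled as real^('m option),
  with component None carrying -1^T y.\<close>
definition Pobj :: "(real^'n) \<times> (real^'m::finite) \<Rightarrow> real^('m option)" where
  "Pobj xy = (\<chi> i. case i of None \<Rightarrow> - (\<Sum>j\<in>UNIV. snd xy $ j) | Some j \<Rightarrow> snd xy $ j)"

definition nonneg_orthant :: "(real^'i::finite) set" where
  "nonneg_orthant = {z. \<forall>i. 0 \<le> z $ i}"

definition upper_image :: "((real^'n) \<times> (real^'m::finite)) set \<Rightarrow> (real^('m option)) set" where
  "upper_image S = closure (msum (Pobj ` S) nonneg_orthant)"

definition MOCP_self_bounded :: "((real^'n) \<times> (real^'m::finite)) set \<Rightarrow> bool" where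
  "MOCP_self_bounded S \<longleftrightarrow> upper_image S \<noteq> UNIV \<and>
     (\<exists>q. upper_image S \<subseteq> msum {q} (rec_cone (upper_image S)))"

definition ones :: "real^'i::finite" where
  "ones = (\<chi> i. 1)"

definition MOCP_finite_sol :: "ereal \<Rightarrow> ((real^'n) \<times> (real^'m::finite)) set \<Rightarrow> real
    \<Rightarrow> ((real^'n) \<times> (real^'m)) set \<Rightarrow> bool" where
  "MOCP_finite_sol p S e Sb \<longleftrightarrow> Sb \<noteq> {} \<and> finite Sb \<and> Sb \<subseteq> S \<and>
     upper_image S \<subseteq> msum (msum (convex hull (Pobj ` Sb)) (rec_cone (upper_image S)))
        {- (e / pnorm p (ones :: real^('m option))) *\<^sub>R ones}"

definition kappa_bar :: "nat \<Rightarrow> ereal \<Rightarrow> real" where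
  "kappa_bar m p = (if p = \<infinity> then real m
     else ((real m powr real_of_ereal p + real m - 1) / (real m + 1)) powr (1 / real_of_ereal p))"

end

theory Submission
  imports Defs
begin


lemma scal1:
  fixes p m x :: real
  assumes p: "p \<ge> 1" and m: "m \<ge> 1" and x: "0 \<le> x" "x \<le> m + 1"
  shows "\<bar>x - 1\<bar> powr p \<le> 1 + (m powr p - 1) * (x / (m + 1))"
proof -
  define l where "l = x / (m + 1)"
  have l0: "0 \<le> l" "l \<le> 1" using x m by (auto simp: l_def field_simps)
  have xl: "x = l * (m + 1)" using m by (simp add: l_def)
  have "\<bar>x - 1\<bar> \<le> l * m + (1 - l) * 1" using l0 m unfolding xl by (auto simp: abs_if algebra_simps)
  hence "\<bar>x - 1\<bar> powr p \<le> (l * m + (1 - l) * 1) powr p"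
    using p by (intro powr_mono2) auto
  also have "\<dots> = ((1 - l) * 1 + l * m) powr p" by (simp add: algebra_simps)
  also have "\<dots> \<le> (1 - l) * 1 powr p + l * m powr p"
    using convex_onD[OF powr_convex[OF p], of l 1 m] l0 m by auto
  finally show ?thesis using m by (simp add: l_def algebra_simps diff_divide_distrib)
qed

lemma recc:
  fixes D :: "'a::real_normed_vector set"
  assumes "closed D" "convex D" "x0 \<in> D" "\<And>s. s \<ge> 0 \<Longrightarrow> x0 + s *\<^sub>R v \<in> D"
  shows "v \<in> rec_cone D"
  unfolding rec_cone_def
proof (intro CollectI ballI allI impI)
  fix x and l :: real assume x: "x \<in> D" and l: "0 \<le> l"
  define s where "s n = real n + 1 + l" for n
  define q where "q n = x + l *\<^sub>R v + (l / s n) *\<^sub>R (x0 - x)" for n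
  have spos: "s n > 0" for n using l by (simp add: s_def)
  have "q n \<in> D" for n
  proof -
    have mu: "0 \<le> l / s n" "l / s n \<le> 1" using spos[of n] l by (auto simp: s_def field_simps)
    have "(1 - l / s n) *\<^sub>R x + (l / s n) *\<^sub>R (x0 + s n *\<^sub>R v) \<in> D"
      using convexD[OF assms(2) x assms(4)[of "s n"]] mu spos[of n] by (auto simp: less_imp_le)
    moreover have "(1 - l / s n) *\<^sub>R x + (l / s n) *\<^sub>R (x0 + s n *\<^sub>R v) = q n"
      using spos[of n] by (simp add: q_def algebra_simps)
    ultimately show ?thesis by simp
  qed
  moreover have "q \<longlonglongrightarrow> x + l *\<^sub>R v"
  proof -
    have "(\<lambda>n. l / s n) \<longlonglongrightarrow> 0"
    proof -
      have "(\<lambda>n. l / (real n + (1 + l))) \<longlonglongrightarrow> 0"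
      proof (rule tendsto_divide_0[OF tendsto_const])
        have "filterlim (\<lambda>n. (1 + l) + real n) at_top sequentially"
          by (rule filterlim_tendsto_add_at_top[OF tendsto_const filterlim_real_sequentially])
        hence "filterlim (\<lambda>n. real n + (1 + l)) at_top sequentially" by (simp add: add.commute)
        thus "filterlim (\<lambda>n. real n + (1 + l)) at_infinity sequentially"
          by (rule filterlim_at_top_imp_at_infinity)
      qed
      thus ?thesis by (simp add: s_def add.assoc)
    qed
    hence "(\<lambda>n. (l / s n) *\<^sub>R (x0 - x)) \<longlonglongrightarrow> 0 *\<^sub>R (x0 - x)"
      by (intro tendsto_intros)
    hence "(\<lambda>n. x + l *\<^sub>R v + (l / s n) *\<^sub>R (x0 - x)) \<longlonglongrightarrow> x + l *\<^sub>R v + 0"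
      by (intro tendsto_intros) auto
    moreover have "q = (\<lambda>n. x + l *\<^sub>R v + (l / s n) *\<^sub>R (x0 - x))" by (simp add: q_def fun_eq_iff)
    ultimately show ?thesis by simp
  qed
  ultimately show "x + l *\<^sub>R v \<in> D"
    using assms(1) closed_sequentially by blast
qed




lemma pnorm_ones:
  assumes "1 \<le> p"
  shows "pnorm p (ones :: real^'i::finite) = (if p = \<infinity> then 1 else real CARD('i) powr (1 / real_of_ereal p))"
proof -
  have "real_of_ereal p > 0" if "p \<noteq> \<infinity>" using assms that by (cases p) auto
  thus ?thesis by (auto simp: pnorm_def ones_def)
qed

lemma sum_bound:
  fixes b :: "real^'m" and q d :: real
  assumes q: "q \<ge> 1" and d: "d > 0" and b: "\<And>i. b$i \<ge> 0"
    and sb: "sum (\<lambda>i. b$i) UNIV \<le> (real CARD('m) + 1) * d"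
  shows "(\<Sum>i\<in>UNIV. \<bar>b$i - d\<bar> powr q) \<le> (real CARD('m) powr q + real CARD('m) - 1) * d powr q"
proof -
  define m where "m = real CARD('m)"
  have m1: "m \<ge> 1" by (simp add: m_def)
  have bi: "b$i \<le> (m + 1) * d" for i
    using member_le_sum[of i UNIV "\<lambda>i. b$i"] b sb by (auto simp: m_def)
  have "\<bar>b$i - d\<bar> powr q = d powr q * \<bar>b$i / d - 1\<bar> powr q" for i
  proof -
    have "\<bar>b$i - d\<bar> = d * \<bar>b$i / d - 1\<bar>" using d by (simp add: field_simps abs_mult_pos)
    thus ?thesis using d by (simp add: powr_mult)
  qed
  hence "(\<Sum>i\<in>UNIV. \<bar>b$i - d\<bar> powr q) = d powr q * (\<Sum>i\<in>UNIV. \<bar>b$i / d - 1\<bar> powr q)"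
    by (simp add: sum_distrib_left)
  also have "\<dots> \<le> d powr q * (\<Sum>i\<in>UNIV. 1 + (m powr q - 1) * ((b$i / d) / (m + 1)))"
    using d b bi m1
    by (intro mult_left_mono sum_mono scal1[OF q m1]) (auto simp: field_simps)
  also have "(\<Sum>i\<in>UNIV. 1 + (m powr q - 1) * ((b$i / d) / (m + 1)))
      = m + (m powr q - 1) * ((\<Sum>i\<in>UNIV. b$i) / (d * (m + 1)))"
    by (simp add: sum.distrib sum_distrib_left m_def sum_divide_distrib)
  also have "\<dots> \<le> m + (m powr q - 1) * 1"
  proof -
    have "m powr q \<ge> 1" using m1 q by (simp add: ge_one_powr_ge_zero)
    moreover have "(\<Sum>i\<in>UNIV. b$i) / (d * (m + 1)) \<le> 1" 
      using sb d m1 by (subst divide_le_eq_1_pos) (auto simp: m_def algebra_simps intro: add_pos_nonneg)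
    ultimately show ?thesis by (intro add_left_mono mult_left_mono) auto
  qed
  finally show ?thesis using d by (simp add: m_def algebra_simps)
qed




lemma card_opt: "CARD('a::finite option) = Suc CARD('a)"
  by (simp add: UNIV_option_conv card_image)

lemma norm_final:
  fixes b :: "real^'m" and p :: ereal and e :: real
  assumes p: "1 \<le> p" and e: "e > 0" and b: "\<And>i. b$i \<ge> 0"
    and sb: "sum (\<lambda>i. b$i) UNIV \<le> (real CARD('m) + 1) * (e / pnorm p (ones::real^'m option))"
  shows "pnorm p (b - (e / pnorm p (ones :: real^'m option)) *\<^sub>R ones) \<le> kappa_bar CARD('m) p * e"
proof (cases "p = \<infinity>")
  case True
  hence po: "pnorm p (ones::real^'m option) = 1" using pnorm_ones[OF p] by simp
  have m1: "real CARD('m) \<ge> 1" by simp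
  have bi: "b$i \<le> (real CARD('m) + 1) * e" for i
    using member_le_sum[of i UNIV "\<lambda>i. b$i"] b sb po by auto
  have em: "e \<le> real CARD('m) * e" using m1 e by simp
  have "\<bar>b$i - e\<bar> \<le> real CARD('m) * e" for i
    using bi[of i] b[of i] e em unfolding abs_le_iff distrib_right by linarith
  thus ?thesis using True po
    by (auto simp: pnorm_def kappa_bar_def ones_def)
next
  case False
  define q where "q = real_of_ereal p"
  have pq: "p = ereal q" using False p by (cases p) (auto simp: q_def)
  have q1: "q \<ge> 1" using p pq by simp
  define m where "m = real CARD('m)"
  have m1: "m \<ge> 1" by (simp add: m_def)
  have po: "pnorm p (ones::real^'m option) = (m + 1) powr (1 / q)"
    using pnorm_ones[OF p, where 'i = "'m option"] False by (simp add: q_def m_def card_opt add.commute)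
  define d where "d = e / (m + 1) powr (1 / q)"
  have d: "d > 0" using e m1 by (simp add: d_def)
  have sb': "sum (\<lambda>i. b$i) UNIV \<le> (real CARD('m) + 1) * d" using sb po by (simp add: d_def m_def)
  define M where "M = m powr q + m - 1"
  have M0: "M \<ge> 0" using m1 q1 ge_one_powr_ge_zero[of m q] by (simp add: M_def)
  have "pnorm p (b - d *\<^sub>R ones) = (\<Sum>i\<in>UNIV. \<bar>b$i - d\<bar> powr q) powr (1 / q)"
    using False by (simp add: pnorm_def q_def ones_def)
  also have "\<dots> \<le> (M * d powr q) powr (1 / q)"
    using sum_bound[OF q1 d b sb'] q1 by (intro powr_mono2) (auto simp: M_def m_def intro: sum_nonneg)
  also have "\<dots> = M powr (1 / q) * d"
    using M0 d q1 by (simp add: powr_mult powr_powr)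
  also have "\<dots> = kappa_bar CARD('m) p * e"
  proof -
    have "kappa_bar CARD('m) p = (M / (m + 1)) powr (1 / q)"
      using False by (simp add: kappa_bar_def q_def M_def m_def)
    also have "\<dots> = M powr (1 / q) / (m + 1) powr (1 / q)"
      using M0 m1 by (simp add: powr_divide)
    finally show ?thesis by (simp add: d_def)
  qed
  finally show ?thesis using po by (simp add: d_def)
qed




definition Lmap :: "real^'m::finite \<Rightarrow> real^('m option)" where
  "Lmap y = (\<chi> i. case i of None \<Rightarrow> - (\<Sum>j\<in>UNIV. y $ j) | Some j \<Rightarrow> y $ j)"

lemma Lmap_None[simp]: "Lmap y $ None = - (\<Sum>j\<in>UNIV. y $ j)" by (simp add: Lmap_def)
lemma Lmap_Some[simp]: "Lmap y $ Some j = y $ j" by (simp add: Lmap_def)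

lemma lemA:
  fixes C :: "(real^'m::finite) set" and z :: "real^('m option)"
  assumes cC: "convex C" and x0: "x0 \<in> C"
    and z: "z \<in> rec_cone (closure (msum (Lmap ` C) nonneg_orthant))"
  shows "\<exists>v \<in> rec_cone (closure C). (\<forall>j. v$j \<le> z$Some j) \<and> - (\<Sum>j\<in>UNIV. v$j) \<le> z$None"
proof -
  let ?U = "closure (msum (Lmap ` C) nonneg_orthant)"
  have "Lmap x0 \<in> msum (Lmap ` C) nonneg_orthant"
    unfolding msum_def nonneg_orthant_def using x0
  proof (intro CollectI exI conjI)
    show "Lmap x0 = Lmap x0 + 0" by simp
  qed (use x0 in auto)
  hence Lx0: "Lmap x0 \<in> ?U" using closure_subset by blast
  have "\<exists>y a. y \<in> C \<and> a \<in> nonneg_orthant \<and> dist (Lmap y + a) (Lmap x0 + real (Suc n) *\<^sub>R z) < 1" for n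
  proof -
    have "Lmap x0 + real (Suc n) *\<^sub>R z \<in> ?U" using z Lx0 unfolding rec_cone_def by auto
    then obtain w where "w \<in> msum (Lmap ` C) nonneg_orthant" "dist w (Lmap x0 + real (Suc n) *\<^sub>R z) < 1"
      using closure_approachable[THEN iffD1] by (metis zero_less_one)
    thus ?thesis unfolding msum_def by auto
  qed
  then obtain Y A where YA: "\<And>n. Y n \<in> C" "\<And>n. A n \<in> nonneg_orthant"
      "\<And>n. dist (Lmap (Y n) + A n) (Lmap x0 + real (Suc n) *\<^sub>R z) < 1"
    by metis
  define V where "V n = (1 / real (Suc n)) *\<^sub>R (Y n - x0)" for n
  have YV: "Y n = x0 + real (Suc n) *\<^sub>R V n" for n by (simp add: V_def)
  define E where "E n = Lmap (Y n) + A n - (Lmap x0 + real (Suc n) *\<^sub>R z)" for n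
  have Ei: "\<bar>E n $ i\<bar> < 1" for n i
    using component_le_norm_cart[of "E n" i] YA(3)[of n] by (simp add: E_def dist_norm)
  have Vup: "V n $ j \<le> z $ Some j + 1 / real (Suc n)" for n j
  proof -
    have "E n $ Some j = Y n $ j + A n $ Some j - x0 $ j - real (Suc n) * z $ Some j"
      by (simp add: E_def)
    moreover have "A n $ Some j \<ge> 0" using YA(2)[of n] by (simp add: nonneg_orthant_def)
    ultimately have "Y n $ j - x0 $ j \<le> real (Suc n) * z $ Some j + 1" using Ei[of n "Some j"] by linarith
    hence "(Y n $ j - x0 $ j) / real (Suc n) \<le> (real (Suc n) * z $ Some j + 1) / real (Suc n)"
      by (intro divide_right_mono) auto
    thus ?thesis by (simp add: V_def add_divide_distrib)
  qed
  have Vsum: "- (\<Sum>j\<in>UNIV. V n $ j) \<le> z $ None + 1 / real (Suc n)" for n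
  proof -
    have "E n $ None = - (\<Sum>j\<in>UNIV. Y n $ j) + A n $ None + (\<Sum>j\<in>UNIV. x0 $ j) - real (Suc n) * z $ None"
      by (simp add: E_def)
    moreover have "A n $ None \<ge> 0" using YA(2)[of n] by (simp add: nonneg_orthant_def)
    ultimately have "- (\<Sum>j\<in>UNIV. Y n $ j - x0 $ j) \<le> real (Suc n) * z $ None + 1"
      using Ei[of n None] by (simp add: sum_subtractf)
    hence "- (\<Sum>j\<in>UNIV. Y n $ j - x0 $ j) / real (Suc n) \<le> (real (Suc n) * z $ None + 1) / real (Suc n)"
      by (intro divide_right_mono) auto
    thus ?thesis by (simp add: V_def add_divide_distrib sum_divide_distrib)
  qed
  define B where "B = \<bar>z $ None\<bar> + 1 + (\<Sum>i\<in>UNIV. \<bar>z $ Some i\<bar> + 1)"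
  have Vb: "\<bar>V n $ j\<bar> \<le> B" for n j
  proof -
    have s1: "(\<Sum>i\<in>UNIV. \<bar>z $ Some i\<bar> + 1) = \<bar>z $ Some j\<bar> + 1 + (\<Sum>i\<in>UNIV - {j}. \<bar>z $ Some i\<bar> + 1)"
      by (simp add: sum.remove)
    have s2: "(\<Sum>i\<in>UNIV. V n $ i) = V n $ j + (\<Sum>i\<in>UNIV - {j}. V n $ i)"
      by (simp add: sum.remove)
    have s3: "(\<Sum>i\<in>UNIV - {j}. V n $ i) \<le> (\<Sum>i\<in>UNIV - {j}. \<bar>z $ Some i\<bar> + 1)"
    proof (rule sum_mono)
      fix i have "1 / real (Suc n) \<le> 1" by simp
      thus "V n $ i \<le> \<bar>z $ Some i\<bar> + 1" using Vup[of n i] by linarith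
    qed
    have s4: "0 \<le> (\<Sum>i\<in>UNIV - {j}. \<bar>z $ Some i\<bar> + 1)" by (intro sum_nonneg) auto
    have "1 / real (Suc n) \<le> 1" by simp
    thus ?thesis using Vup[of n j] Vsum[of n] s1 s2 s3 s4 unfolding B_def by linarith
  qed
  have "bounded (range V)"
  proof -
    have "norm (V n) \<le> real CARD('m) * B" for n
    proof -
      have "norm (V n) \<le> (\<Sum>j\<in>UNIV. \<bar>V n $ j\<bar>)" by (rule norm_le_l1_cart)
      also have "\<dots> \<le> (\<Sum>j\<in>(UNIV::'m set). B)" by (intro sum_mono Vb)
      finally show ?thesis by simp
    qed
    thus ?thesis unfolding bounded_iff by blast
  qed
  then obtain l r where r: "strict_mono r" and lim: "(V \<circ> r) \<longlonglongrightarrow> l"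
    using bounded_imp_convergent_subsequence by blast
  have inv0: "(\<lambda>n. 1 / real (Suc (r n))) \<longlonglongrightarrow> 0"
    using LIMSEQ_subseq_LIMSEQ[OF LIMSEQ_inverse_real_of_nat r] by (simp add: o_def inverse_eq_divide)
  have l1: "l $ j \<le> z $ Some j" for j
  proof -
    have "(\<lambda>n. (V \<circ> r) n $ j) \<longlonglongrightarrow> l $ j" by (intro tendsto_intros lim)
    moreover have "(\<lambda>n. z $ Some j + 1 / real (Suc (r n))) \<longlonglongrightarrow> z $ Some j"
      using tendsto_add[OF tendsto_const inv0] by simp
    ultimately show ?thesis
      by (rule LIMSEQ_le[where x = "l $ j"]) (use Vup in auto)
  qed
  have l2: "- (\<Sum>j\<in>UNIV. l $ j) \<le> z $ None"
  proof -
    have "(\<lambda>n. - (\<Sum>j\<in>UNIV. (V \<circ> r) n $ j)) \<longlonglongrightarrow> - (\<Sum>j\<in>UNIV. l $ j)" by (intro tendsto_intros lim)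
    moreover have "(\<lambda>n. z $ None + 1 / real (Suc (r n))) \<longlonglongrightarrow> z $ None"
      using tendsto_add[OF tendsto_const inv0] by simp
    ultimately show ?thesis
      by (rule LIMSEQ_le) (use Vsum in auto)
  qed
  have ray: "x0 + s *\<^sub>R l \<in> closure C" if s: "s \<ge> 0" for s
  proof (rule Lim_in_closed_set[of "closure C"])
    show "closed (closure C)" by simp
    show "((\<lambda>n. x0 + s *\<^sub>R (V \<circ> r) n) \<longlongrightarrow> x0 + s *\<^sub>R l) sequentially" by (intro tendsto_intros lim)
    show "sequentially \<noteq> bot" by simp
    show "\<forall>\<^sub>F n in sequentially. x0 + s *\<^sub>R (V \<circ> r) n \<in> closure C"
    proof (rule eventually_sequentiallyI[of "nat \<lceil>s\<rceil>"])
      fix n assume n: "nat \<lceil>s\<rceil> \<le> n"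
      define k where "k = real (Suc (r n))"
      have "real n \<le> real (r n)" using seq_suble[OF r, of n] by simp
      hence sk: "s \<le> k" using n s by (simp add: k_def)
      have kp: "k > 0" by (simp add: k_def)
      have "(1 - s / k) *\<^sub>R x0 + (s / k) *\<^sub>R Y (r n) \<in> C"
        using convexD[OF cC x0 YA(1)[of "r n"], of "1 - s / k" "s / k"] sk kp s by auto
      moreover have "(1 - s / k) *\<^sub>R x0 + (s / k) *\<^sub>R Y (r n) = x0 + s *\<^sub>R (V \<circ> r) n"
      proof -
        have "Y (r n) = x0 + k *\<^sub>R (V \<circ> r) n" by (simp add: YV k_def)
        thus ?thesis using kp by (simp add: scaleR_add_right scaleR_diff_left)
      qed
      ultimately show "x0 + s *\<^sub>R (V \<circ> r) n \<in> closure C" using closure_subset by auto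
    qed
  qed
  have "l \<in> rec_cone (closure C)"
    by (rule recc[of _ x0]) (use ray x0 closure_subset cC in auto)
  thus ?thesis using l1 l2 by blast
qed




lemma Pobj_Lmap: "Pobj xy = Lmap (snd xy)"
  by (simp add: Pobj_def Lmap_def)

lemma linear_Lmap: "linear Lmap"
proof (rule linearI)
  fix x y :: "real^'a" and c :: real
  show "Lmap (x + y) = Lmap x + Lmap y"
    by (simp add: vec_eq_iff Lmap_def sum.distrib split: option.splits)
  show "Lmap (c *\<^sub>R x) = c *\<^sub>R Lmap x"
    by (simp add: vec_eq_iff Lmap_def sum_distrib_left split: option.splits)
qed

theorem mainTheorem7:
  fixes S Sb :: "((real^'n) \<times> (real^'m)) set" and p :: ereal and e :: real
  assumes "convex S"
    and "MOCP_self_bounded S"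
    and "1 \<le> p"
    and "e > 0"
    and "MOCP_finite_sol p S e Sb"
  shows "CP_finite_sol p S (kappa_bar CARD('m) p * e) Sb"
proof -
  define d where "d = e / pnorm p (ones :: real^'m option)"
  have dpos: "d > 0"
  proof -
    have "pnorm p (ones :: real^'m option) > 0"
      using pnorm_ones[OF assms(3), where 'i = "'m option"] by auto
    thus ?thesis using assms(4) by (simp add: d_def)
  qed
  let ?C = "CP_Y S"
  have cC: "convex ?C" unfolding CP_Y_def by (rule convex_linear_image[OF linear_snd assms(1)])
  have UI: "upper_image S = closure (msum (Lmap ` ?C) nonneg_orthant)"
    by (simp add: upper_image_def CP_Y_def image_image Pobj_Lmap)
  have sol: "Sb \<noteq> {}" "finite Sb" "Sb \<subseteq> S"
    "upper_image S \<subseteq> msum (msum (convex hull (Pobj ` Sb)) (rec_cone (upper_image S))) {- d *\<^sub>R ones}"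
    using assms(5) unfolding MOCP_finite_sol_def d_def by auto
  have hull: "convex hull (Pobj ` Sb) = Lmap ` (convex hull (snd ` Sb))"
    by (simp add: convex_hull_linear_image[OF linear_Lmap] image_image Pobj_Lmap)
  have "y \<in> msum (msum (convex hull (snd ` Sb)) (rec_cone (closure ?C))) (pball p (kappa_bar CARD('m) p * e))"
    if y: "y \<in> ?C" for y
  proof -
    have "Lmap y \<in> msum (Lmap ` ?C) nonneg_orthant"
      unfolding msum_def nonneg_orthant_def
    proof (intro CollectI exI conjI)
      show "Lmap y = Lmap y + 0" by simp
    qed (use y in auto)
    hence "Lmap y \<in> upper_image S" using closure_subset UI by blast
    hence m: "Lmap y \<in> msum (msum (Lmap ` (convex hull (snd ` Sb))) (rec_cone (upper_image S))) {- d *\<^sub>R ones}"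
      using sol(4) unfolding hull by blast
    then obtain c r where c: "c \<in> Lmap ` (convex hull (snd ` Sb))" and r: "r \<in> rec_cone (upper_image S)"
      and eq: "Lmap y = c + r - d *\<^sub>R ones"
      unfolding msum_def by fastforce
    then obtain yb where yb: "yb \<in> convex hull (snd ` Sb)" and cyb: "c = Lmap yb" by auto
    have rS: "r $ Some j = y $ j - yb $ j + d" for j
      using arg_cong[OF eq, of "\<lambda>v. v $ Some j"] cyb by (simp add: ones_def)
    have rN: "r $ None = - (\<Sum>j\<in>UNIV. y $ j) + (\<Sum>j\<in>UNIV. yb $ j) + d"
      using arg_cong[OF eq, of "\<lambda>v. v $ None"] cyb by (simp add: ones_def)
    obtain v where v: "v \<in> rec_cone (closure ?C)" and v1: "\<And>j. v$j \<le> r$Some j"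
      and v2: "- (\<Sum>j\<in>UNIV. v$j) \<le> r$None"
      using lemA[OF cC y r[unfolded UI]] by blast
    define a where "a = (\<chi> j. r $ Some j - v $ j)"
    have a0: "\<And>j. a $ j \<ge> 0" using v1 by (simp add: a_def)
    have asum: "sum (\<lambda>j. a $ j) UNIV \<le> (real CARD('m) + 1) * d"
    proof -
      have "sum (\<lambda>j. a $ j) UNIV = (\<Sum>j\<in>UNIV. y $ j) - (\<Sum>j\<in>UNIV. yb $ j) + real CARD('m) * d - (\<Sum>j\<in>UNIV. v $ j)"
        by (simp add: a_def rS sum.distrib sum_subtractf)
      thus ?thesis using v2 rN by (simp add: algebra_simps)
    qed
    have nb: "pnorm p (a - d *\<^sub>R ones) \<le> kappa_bar CARD('m) p * e"
      using norm_final[OF assms(3) assms(4) a0 asum[unfolded d_def]] by (simp add: d_def)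
    have "y = (yb + v) + (a - d *\<^sub>R ones)"
      by (simp add: vec_eq_iff a_def rS ones_def)
    thus ?thesis unfolding msum_def pball_def using yb v nb by blast
  qed
  thus ?thesis unfolding CP_finite_sol_def using sol by blast
qed


end
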